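(* With $\phi_i,\theta^*,\pi_i,\pi_i^*,\mathcal{L},u,v,\lambda_\phi$ as in the generalized linear model setting: (i) $\mathcal{L}$ is $\beta$-smooth with $\beta=\frac38\max_i\|\phi_i\|_2^2$, i.e. $|z^\top\nabla^2\mathcal{L}(\theta)z|\le\beta\|z\|_2^2$ for all $\theta,z$; (ii) for every $\theta$ with $\mathcal{L}(\theta)>0$ and every $z\in\mathbb{R}^d$, $|z^\top\nabla^2\mathcal{L}(\theta)z|\le\beta(\theta)\|z\|_2^2$, where $$\beta(\theta)=L_1(\theta)\Big\|\frac{\partial\mathcal{L}(\theta)}{\partial\theta}\Big\|_2+L_0(\theta)\,\frac{\|\partial\mathcal{L}(\theta)/\partial\theta\|_2^2}{\mathcal{L}(\theta)},$$ $$L_1(\theta)=\frac{\max_i\|\phi_i\|_2^2}{32\,(\min\{u(\theta),v\}\sqrt{\lambda_\phi})^{3/2}},\qquad L_0(\theta)=\frac{17\max_i\|\phi_i\|_2^2}{512\,u(\theta)^2\min\{u(\theta)^2,v^2\}\lambda_\phi}.$$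
   Context: Generalized linear model setting: $\phi_1,\dots,\phi_N\in\mathbb{R}^d$ (not all zero), $\theta^*\in\mathbb{R}^d$, $\sigma(z)=1/(1+e^{-z})$, $\pi_i^*=\sigma(\phi_i^\top\theta^* )$, $\pi_i=\pi_i(\theta)=\sigma(\phi_i^\top\theta)$, $\mathcal{L}(\theta)=\frac1N\sum_{i=1}^N(\pi_i-\pi_i^* )^2$, $u(\theta)=\min_i\pi_i(1-\pi_i)$, $v=\min_i\pi_i^*(1-\pi_i^* )$, $\lambda_\phi$ the smallest positive eigenvalue of $\frac1N\sum_i\phi_i\phi_i^\top$. *)

theory Defs
  imports "HOL-Analysis.Analysis"
begin

definition sigmoid :: "real \<Rightarrow> real" where
  "sigmoid z = 1 / (1 + exp (- z))"

definition partial :: "(real^'d \<Rightarrow> real) \<Rightarrow> 'd \<Rightarrow> real^'d \<Rightarrow> real" where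
  "partial f i x = deriv (\<lambda>t. f (x + t *\<^sub>R axis i 1)) 0"

definition grad :: "(real^'d \<Rightarrow> real) \<Rightarrow> real^'d \<Rightarrow> real^'d" where
  "grad f x = (\<chi> i. partial f i x)"

definition hessian :: "(real^'d \<Rightarrow> real) \<Rightarrow> real^'d \<Rightarrow> real^'d^'d" where
  "hessian f x = (\<chi> i j. partial (\<lambda>y. partial f i y) j x)"

definition glm_pi :: "(nat \<Rightarrow> real^'d) \<Rightarrow> real^'d \<Rightarrow> nat \<Rightarrow> real" where
  "glm_pi phi \<theta> i = sigmoid (phi i \<bullet> \<theta>)"

definition glm_loss :: "nat \<Rightarrow> (nat \<Rightarrow> real^'d) \<Rightarrow> real^'d \<Rightarrow> real^'d \<Rightarrow> real" where
  "glm_loss N phi \<theta>s \<theta> = (1 / real N) * (\<Sum>i<N. (glm_pi phi \<theta> i - glm_pi phi \<theta>s i)^2)"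

definition glm_u :: "nat \<Rightarrow> (nat \<Rightarrow> real^'d) \<Rightarrow> real^'d \<Rightarrow> real" where
  "glm_u N phi \<theta> = Min {glm_pi phi \<theta> i * (1 - glm_pi phi \<theta> i) | i. i < N}"

definition max_phi_sq :: "nat \<Rightarrow> (nat \<Rightarrow> real^'d) \<Rightarrow> real" where
  "max_phi_sq N phi = Max {(norm (phi i))^2 | i. i < N}"

definition outer :: "real^'d \<Rightarrow> real^'d \<Rightarrow> real^'d^'d" where
  "outer a b = (\<chi> i j. a $ i * b $ j)"

definition design_matrix :: "nat \<Rightarrow> (nat \<Rightarrow> real^'d) \<Rightarrow> real^'d^'d" where
  "design_matrix N phi = (1 / real N) *\<^sub>R (\<Sum>i<N. outer (phi i) (phi i))"

definition is_eigenvalue :: "real^'d^'d \<Rightarrow> real \<Rightarrow> bool" where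
  "is_eigenvalue A c \<longleftrightarrow> (\<exists>x. x \<noteq> 0 \<and> A *v x = c *\<^sub>R x)"

definition lambda_phi :: "nat \<Rightarrow> (nat \<Rightarrow> real^'d) \<Rightarrow> real" where
  "lambda_phi N phi = Min {c. c > 0 \<and> is_eigenvalue (design_matrix N phi) c}"

end

theory Submission
  imports Defs
begin


definition sd :: "real \<Rightarrow> real" where "sd a = sigmoid a * (1 - sigmoid a)"

lemma sigmoid_pos: "0 < sigmoid a" and sigmoid_lt1: "sigmoid a < 1"
  unfolding sigmoid_def by (auto simp: divide_simps add_pos_pos)

lemma sigmoid_deriv: "(sigmoid has_real_derivative sd a) (at a)"
proof -
  have "((\<lambda>z. 1 / (1 + exp (- z))) has_real_derivative
        - (exp (-a) * (-1)) / (1 + exp (-a))^2) (at a)"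
    by (rule derivative_eq_intros | simp add: add_pos_pos)+ 
       (auto simp: power2_eq_square add_pos_pos, smt (verit) exp_gt_zero)
  moreover have "- (exp (-a) * (-1)) / (1 + exp (-a))^2 = sd a"
  proof -
    have p: "1 + exp (-a) > 0" by (smt (verit) exp_gt_zero)
    then show ?thesis unfolding sd_def sigmoid_def
      by (simp add: field_simps power2_eq_square)
  qed
  ultimately show ?thesis unfolding sigmoid_def[abs_def] by simp
qed

lemma sigmoid_mono: "a \<le> b \<Longrightarrow> sigmoid a \<le> sigmoid b"
  unfolding sigmoid_def by (auto simp: divide_simps add_pos_pos)

lemma partial_sum_comp:
  fixes phi :: "nat \<Rightarrow> real^'d"
  assumes "\<And>k a. k < N \<Longrightarrow> (h k has_real_derivative h' k a) (at a)"
  shows "partial (\<lambda>y. \<Sum>k<N. h k (phi k \<bullet> y)) j x = (\<Sum>k<N. h' k (phi k \<bullet> x) * phi k $ j)"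
proof -
  have e: "phi k \<bullet> (x + t *\<^sub>R axis j 1) = phi k \<bullet> x + t * phi k $ j" for k t
    by (simp add: inner_add_right inner_axis)
  have "((\<lambda>t. \<Sum>k<N. h k (phi k \<bullet> x + t * phi k $ j)) has_real_derivative
        (\<Sum>k<N. h' k (phi k \<bullet> x) * phi k $ j)) (at 0)"
  proof (rule DERIV_sum)
    fix k assume "k \<in> {..<N}"
    hence d: "(h k has_real_derivative h' k (phi k \<bullet> x + 0 * phi k $ j)) (at (phi k \<bullet> x + 0 * phi k $ j))"
      using assms by auto
    have "((\<lambda>t. phi k \<bullet> x + t * phi k $ j) has_real_derivative phi k $ j) (at 0)"
      by (rule derivative_eq_intros | simp)+
    from DERIV_chain2[OF d this] show "((\<lambda>t. h k (phi k \<bullet> x + t * phi k $ j)) has_real_derivative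
        h' k (phi k \<bullet> x) * phi k $ j) (at 0)" by simp
  qed
  then show ?thesis unfolding partial_def e by (rule DERIV_imp_deriv)
qed

lemma sd_deriv: "(sd has_real_derivative sd a * (1 - 2 * sigmoid a)) (at a)"
proof -
  have "((\<lambda>a. sigmoid a * (1 - sigmoid a)) has_real_derivative
     sd a * (1 - sigmoid a) + sigmoid a * (- sd a)) (at a)"
    by (rule derivative_eq_intros sigmoid_deriv refl)+ simp
  then show ?thesis unfolding sd_def[abs_def] by (simp add: algebra_simps)
qed

definition hc :: "real \<Rightarrow> real \<Rightarrow> real" where
  "hc a c = sd a * (sd a + (sigmoid a - c) * (1 - 2 * sigmoid a))"

lemma loss_eq: "glm_loss N phi ts = (\<lambda>y. \<Sum>k<N. (\<lambda>a. (1/N) * (sigmoid a - glm_pi phi ts k)^2) (phi k \<bullet> y))"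
  by (rule ext) (simp add: glm_loss_def glm_pi_def sum_distrib_left)

lemma partial_loss:
  "partial (glm_loss N phi ts) i y =
     (\<Sum>k<N. 2 / N * (sigmoid (phi k \<bullet> y) - glm_pi phi ts k) * sd (phi k \<bullet> y) * phi k $ i)"
proof -
  have "partial (glm_loss N phi ts) i y = (\<Sum>k<N. (1/N) * (2 * (sigmoid (phi k \<bullet> y) - glm_pi phi ts k) * sd (phi k \<bullet> y)) * phi k $ i)"
    unfolding loss_eq
  proof (rule partial_sum_comp)
    fix k a
    show "((\<lambda>a. (1/N) * (sigmoid a - glm_pi phi ts k)^2) has_real_derivative
       (1/N) * (2 * (sigmoid a - glm_pi phi ts k) * sd a)) (at a)"
      by (rule derivative_eq_intros sigmoid_deriv refl)+ simp
  qed
  then show ?thesis by (simp add: algebra_simps)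
qed

lemma partial_loss_fun:
  "(\<lambda>y. partial (glm_loss N phi ts) i y) =
     (\<lambda>y. \<Sum>k<N. (\<lambda>a. 2 / N * (sigmoid a - glm_pi phi ts k) * sd a * phi k $ i) (phi k \<bullet> y))"
  by (rule ext) (simp add: partial_loss)

lemma hessian_loss:
  "hessian (glm_loss N phi ts) x $ i $ j =
     (\<Sum>k<N. 2 / N * hc (phi k \<bullet> x) (glm_pi phi ts k) * phi k $ i * phi k $ j)"
proof -
  have "partial (\<lambda>y. partial (glm_loss N phi ts) i y) j x =
     (\<Sum>k<N. (2 / N * phi k $ i * (sd (phi k \<bullet> x) * sd (phi k \<bullet> x) + (sigmoid (phi k \<bullet> x) - glm_pi phi ts k) * (sd (phi k \<bullet> x) * (1 - 2 * sigmoid (phi k \<bullet> x))))) * phi k $ j)"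
    unfolding partial_loss_fun
  proof (rule partial_sum_comp)
    fix k a
    show "((\<lambda>a. 2 / N * (sigmoid a - glm_pi phi ts k) * sd a * phi k $ i) has_real_derivative
       2 / N * phi k $ i * (sd a * sd a + (sigmoid a - glm_pi phi ts k) * (sd a * (1 - 2 * sigmoid a)))) (at a)"
      by (rule derivative_eq_intros sigmoid_deriv sd_deriv refl)+ (simp add: algebra_simps)
  qed
  then show ?thesis unfolding hessian_def hc_def by (simp add: algebra_simps)
qed

lemma quad_hessian:
  "z \<bullet> (hessian (glm_loss N phi ts) x *v z) =
     (\<Sum>k<N. 2 / N * hc (phi k \<bullet> x) (glm_pi phi ts k) * (phi k \<bullet> z)^2)"
proof -
  have "z \<bullet> (hessian (glm_loss N phi ts) x *v z) =
     (\<Sum>i\<in>UNIV. z $ i * (\<Sum>j\<in>UNIV. (\<Sum>k<N. 2 / N * hc (phi k \<bullet> x) (glm_pi phi ts k) * phi k $ i * phi k $ j) * z $ j))"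
    by (simp add: inner_vec_def matrix_vector_mult_def hessian_loss)
  also have "\<dots> = (\<Sum>k<N. 2 / N * hc (phi k \<bullet> x) (glm_pi phi ts k) * ((\<Sum>i\<in>UNIV. phi k $ i * z $ i) * (\<Sum>j\<in>UNIV. phi k $ j * z $ j)))"
    by (simp add: sum_distrib_left sum_distrib_right sum.swap[of _ UNIV "{..<N}"] mult_ac)
  also have "\<dots> = (\<Sum>k<N. 2 / N * hc (phi k \<bullet> x) (glm_pi phi ts k) * (phi k \<bullet> z)^2)"
    by (simp add: inner_vec_def power2_eq_square)
  finally show ?thesis .
qed

lemma inner_grad_loss:
  "grad (glm_loss N phi ts) x \<bullet> w =
     (\<Sum>k<N. 2 / N * (sigmoid (phi k \<bullet> x) - glm_pi phi ts k) * sd (phi k \<bullet> x) * (phi k \<bullet> w))"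
proof -
  have "grad (glm_loss N phi ts) x \<bullet> w = (\<Sum>i\<in>UNIV. (\<Sum>k<N. 2 / N * (sigmoid (phi k \<bullet> x) - glm_pi phi ts k) * sd (phi k \<bullet> x) * phi k $ i) * w $ i)"
    by (simp add: inner_vec_def grad_def partial_loss)
  also have "\<dots> = (\<Sum>k<N. 2 / N * (sigmoid (phi k \<bullet> x) - glm_pi phi ts k) * sd (phi k \<bullet> x) * (\<Sum>i\<in>UNIV. phi k $ i * w $ i))"
    by (simp only: sum_distrib_left sum_distrib_right, subst sum.swap) (simp add: mult_ac)
  finally show ?thesis by (simp add: inner_vec_def)
qed

lemma sd_pos: "0 < sd a" unfolding sd_def using sigmoid_pos[of a] sigmoid_lt1[of a] by simp

lemma sd_le: "sd a \<le> 1/4"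
proof -
  have "0 \<le> (sigmoid a - 1/2)^2" by simp
  then show ?thesis unfolding sd_def by (simp add: power2_eq_square algebra_simps)
qed

lemma cube_aux: "0 \<le> t \<Longrightarrow> t \<le> 1 \<Longrightarrow> t * (1 - t^2) \<le> (1/2::real)"
proof -
  assume t: "0 \<le> t" "t \<le> 1"
  have "0 \<le> (t - 1/2)^2 * (t + 1)" using t by simp
  moreover have "(t - 1/2)^2 * (t + 1) = t^3 - (3/4) * t + 1/4" by (simp add: power2_eq_square power3_eq_cube algebra_simps)
  ultimately have "t * (1 - t^2) \<le> 1/4 + t/4" by (simp add: power2_eq_square power3_eq_cube field_simps)
  then show ?thesis using t by simp
qed

lemma hc_bound:
  assumes "0 < c" "c < 1"
  shows "\<bar>hc a c\<bar> \<le> 3/16"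
proof -
  define q where "q = sigmoid a"
  have q: "0 < q" "q < 1" unfolding q_def using sigmoid_pos sigmoid_lt1 by auto
  define s where "s = q * (1 - q)"
  have s: "0 < s" "s \<le> 1/4" using sd_pos[of a] sd_le[of a] unfolding s_def q_def sd_def by auto
  have h: "hc a c = s * s + s * ((q - c) * (1 - 2 * q))" unfolding hc_def sd_def s_def q_def by (simp add: algebra_simps)
  have "\<bar>s * ((q - c) * (1 - 2 * q))\<bar> = s * \<bar>q - c\<bar> * \<bar>1 - 2 * q\<bar>" using s by (simp add: abs_mult)
  also have "\<dots> \<le> s * 1 * \<bar>1 - 2 * q\<bar>"
    using q assms s by (intro mult_right_mono mult_left_mono) auto
  also have "\<dots> = \<bar>1 - 2*q\<bar> * (1 - \<bar>1 - 2*q\<bar>^2) / 4"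
    unfolding s_def by (simp add: power2_eq_square algebra_simps abs_mult_self_eq)
  also have "\<dots> \<le> (1/2) / 4"
    using cube_aux[of "\<bar>1 - 2*q\<bar>"] q by (intro divide_right_mono) auto
  finally have "\<bar>s * ((q - c) * (1 - 2 * q))\<bar> \<le> 1/8" by simp
  moreover have "s * s \<le> 1/16" using s mult_mono[of s "1/4" s "1/4"] by auto
  moreover have "0 \<le> s * s" using s by simp
  ultimately show ?thesis unfolding h by linarith
qed

lemma quad_min:
  fixes q q1 q2 :: real
  assumes "q1 \<le> q" "q \<le> q2"
  shows "min (q1 * (1 - q1)) (q2 * (1 - q2)) \<le> q * (1 - q)"
proof (cases "1 - q - q1 \<ge> 0")
  case True
  have "q * (1 - q) - q1 * (1 - q1) = (q - q1) * (1 - q - q1)" by (simp add: algebra_simps)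
  also have "\<dots> \<ge> 0" using True assms by simp
  finally show ?thesis by linarith
next
  case False
  have "q * (1 - q) - q2 * (1 - q2) = (q2 - q) * (q + q2 - 1)" by (simp add: algebra_simps)
  also have "\<dots> \<ge> 0" using False assms by simp
  finally show ?thesis by linarith
qed

lemma sigmoid_mvt:
  "\<exists>c. sigmoid b - sigmoid a = c * (b - a) \<and> min (sd a) (sd b) \<le> c \<and> c \<le> 1/4"
proof -
  have main: "\<exists>c. sigmoid y - sigmoid x = c * (y - x) \<and> min (sd x) (sd y) \<le> c \<and> c \<le> 1/4"
    if "x < y" for x y
  proof -
    obtain z where z: "x < z" "z < y" "sigmoid y - sigmoid x = (y - x) * sd z"
      using MVT2[OF \<open>x < y\<close>, of sigmoid sd] sigmoid_deriv by blast
    have "min (sd x) (sd y) \<le> sd z"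
      unfolding sd_def using z sigmoid_mono by (intro quad_min) auto
    then show ?thesis using z sd_le[of z] by (intro exI[of _ "sd z"]) (simp add: mult.commute)
  qed
  show ?thesis
  proof (cases a b rule: linorder_cases)
    case less then show ?thesis using main by blast
  next
    case equal then show ?thesis using sd_le[of a] by (intro exI[of _ "sd a"]) simp
  next
    case greater
    then obtain c where "sigmoid a - sigmoid b = c * (a - b) \<and> min (sd b) (sd a) \<le> c \<and> c \<le> 1/4"
      using main by blast
    then show ?thesis by (intro exI[of _ c]) (auto simp: algebra_simps min.commute)
  qed
qed

lemma sigmoid_diff_bounds:
  fixes a b :: real
  defines "r \<equiv> sigmoid b - sigmoid a" and "D \<equiv> b - a"
  assumes "m \<le> sd a" "m \<le> sd b" "0 \<le> m"
  shows "4 * r^2 \<le> r * D" and "m^2 * D^2 \<le> r^2"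
proof -
  obtain c where c: "r = c * D" "min (sd a) (sd b) \<le> c" "c \<le> 1/4"
    using sigmoid_mvt[of b a] unfolding r_def D_def by blast
  have m: "m \<le> c" using c assms by linarith
  have c0: "0 \<le> c" using m assms by linarith
  have "4 * r^2 = (4 * c) * (c * D^2)" using c by (simp add: power2_eq_square algebra_simps)
  also have "\<dots> \<le> 1 * (c * D^2)" using c c0 by (intro mult_right_mono) auto
  also have "\<dots> = r * D" using c by (simp add: power2_eq_square)
  finally show "4 * r^2 \<le> r * D" .
  have "m^2 \<le> c^2" using m assms by (intro power_mono) auto
  then show "m^2 * D^2 \<le> r^2" using c by (simp add: power_mult_distrib mult_right_mono)
qed



lemma design_mv:
  "design_matrix N phi *v w = (1 / real N) *\<^sub>R (\<Sum>k<N. (phi k \<bullet> w) *\<^sub>R phi k)"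
proof -
  have "(design_matrix N phi *v w) $ i = ((1 / real N) *\<^sub>R (\<Sum>k<N. (phi k \<bullet> w) *\<^sub>R phi k)) $ i" for i
  proof -
    have "(design_matrix N phi *v w) $ i = (\<Sum>j\<in>UNIV. (1 / real N) * (\<Sum>k<N. phi k $ i * phi k $ j) * w $ j)"
      by (simp add: matrix_vector_mult_def design_matrix_def outer_def)
    also have "\<dots> = (1 / real N) * (\<Sum>k<N. (\<Sum>j\<in>UNIV. phi k $ j * w $ j) * phi k $ i)"
      by (simp only: sum_distrib_left sum_distrib_right, subst sum.swap) (simp add: mult_ac)
    finally show ?thesis by (simp add: inner_vec_def)
  qed
  then show ?thesis by (simp add: vec_eq_iff)
qed

lemma design_bil:
  "y \<bullet> (design_matrix N phi *v w) = (1 / real N) * (\<Sum>k<N. (phi k \<bullet> y) * (phi k \<bullet> w))"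
proof -
  have "y \<bullet> (design_matrix N phi *v w) = (1 / real N) * (\<Sum>k<N. (phi k \<bullet> w) * (y \<bullet> phi k))"
    unfolding design_mv by (simp add: inner_sum_right)
  also have "\<dots> = (1 / real N) * (\<Sum>k<N. (phi k \<bullet> y) * (phi k \<bullet> w))"
    by (rule arg_cong[where f="\<lambda>x. _ * x"], rule sum.cong) (simp_all add: inner_commute)
  finally show ?thesis .
qed

lemma design_in_span: "design_matrix N phi *v w \<in> span (phi ` {..<N})"
  unfolding design_mv
  by (intro span_mul span_sum span_base) auto

lemma eig_orth:
  assumes "design_matrix N phi *v x = c *\<^sub>R x" "design_matrix N phi *v y = d *\<^sub>R y" "c \<noteq> d"
  shows "x \<bullet> y = 0"
proof -
  have "y \<bullet> (design_matrix N phi *v x) = x \<bullet> (design_matrix N phi *v y)"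
    by (simp add: design_bil mult_ac)
  then have "c * (x \<bullet> y) = d * (x \<bullet> y)" using assms by (simp add: inner_commute)
  then show ?thesis using assms(3) by simp
qed

lemma eig_finite: "finite {c. c > 0 \<and> is_eigenvalue (design_matrix N phi) c}"
proof -
  let ?S = "{c. c > 0 \<and> is_eigenvalue (design_matrix N phi) c}"
  define f where "f c = (SOME x. x \<noteq> 0 \<and> design_matrix N phi *v x = c *\<^sub>R x)" for c
  have f: "f c \<noteq> 0 \<and> design_matrix N phi *v f c = c *\<^sub>R f c" if "c \<in> ?S" for c
  proof -
    from that obtain x where "x \<noteq> 0 \<and> design_matrix N phi *v x = c *\<^sub>R x"
      unfolding is_eigenvalue_def by auto
    then show ?thesis unfolding f_def by (rule someI)
  qed
  have inj: "inj_on f ?S"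
  proof (rule inj_onI)
    fix c d assume cd: "c \<in> ?S" "d \<in> ?S" "f c = f d"
    then have "c *\<^sub>R f c = d *\<^sub>R f c" using f[of c] f[of d] by metis
    then show "c = d" using f[OF cd(1)] by simp
  qed
  have "pairwise orthogonal (f ` ?S)"
    unfolding pairwise_def orthogonal_def
  proof (intro ballI impI)
    fix x y assume xy: "x \<in> f ` ?S" "y \<in> f ` ?S" "x \<noteq> y"
    then obtain c d where cd: "c \<in> ?S" "d \<in> ?S" "x = f c" "y = f d" by blast
    then have "c \<noteq> d" using xy by auto
    then show "x \<bullet> y = 0" using eig_orth f cd by metis
  qed
  moreover have "0 \<notin> f ` ?S" using f by auto
  ultimately have "independent (f ` ?S)" by (rule pairwise_orthogonal_independent)
  then have "finite (f ` ?S)" by (rule finiteI_independent)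
  then show ?thesis using inj finite_imageD by blast
qed

lemma lambda_phi_props:
  fixes phi :: "nat \<Rightarrow> real^'d"
  assumes N: "N \<ge> 1" and ex: "\<exists>i<N. phi i \<noteq> 0"
  shows "lambda_phi N phi > 0"
    and "\<And>w. w \<in> span (phi ` {..<N}) \<Longrightarrow>
           lambda_phi N phi * (norm w)^2 \<le> (1 / real N) * (\<Sum>k<N. (phi k \<bullet> w)^2)"
proof -
  define W where "W = span (phi ` {..<N})"
  define Q where "Q w = (1 / real N) * (\<Sum>k<N. (phi k \<bullet> w)^2)" for w :: "real^'d"
  define K where "K = W \<inter> sphere 0 1"
  have cK: "compact K" unfolding K_def W_def
    by (simp add: closed_subspace compact_Int_closed Int_commute)
  have neK: "K \<noteq> {}"
  proof -
    obtain i where i: "i < N" "phi i \<noteq> 0" using ex by blast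
    have "phi i \<in> W" unfolding W_def using i by (intro span_base) auto
    then have "(1 / norm (phi i)) *\<^sub>R phi i \<in> K"
      unfolding K_def W_def using i by (auto intro!: span_mul)
    then show ?thesis by blast
  qed
  have cQ: "continuous_on K Q"
    unfolding Q_def by (intro continuous_intros)
  obtain w0 where w0: "w0 \<in> K" "\<And>y. y \<in> K \<Longrightarrow> Q w0 \<le> Q y"
    using continuous_attains_inf[OF cK neK cQ] by blast
  define m0 where "m0 = Q w0"
  have w0W: "w0 \<in> W" and nw0: "norm w0 = 1" using w0 unfolding K_def by auto
  have Qhom: "Q (c *\<^sub>R y) = c^2 * Q y" for c y
    unfolding Q_def by (simp add: sum_distrib_left power_mult_distrib mult_ac)
  have claim1: "m0 * (norm y)^2 \<le> Q y" if "y \<in> W" for y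
  proof (cases "y = 0")
    case True then show ?thesis by (simp add: Q_def)
  next
    case False
    have "(1 / norm y) *\<^sub>R y \<in> K" using that False unfolding K_def W_def by (auto intro: span_mul)
    then have "m0 \<le> (1 / norm y)^2 * Q y" using w0 Qhom unfolding m0_def by metis
    then show ?thesis using False by (simp add: field_simps power2_eq_square)
  qed
  have QA: "Q y = y \<bullet> (design_matrix N phi *v y)" for y
    by (simp add: Q_def design_bil power2_eq_square)
  define y where "y = design_matrix N phi *v w0 - m0 *\<^sub>R w0"
  have yW: "y \<in> W" unfolding y_def W_def
    using w0W design_in_span unfolding W_def by (intro span_diff span_mul) auto
  have key: "0 \<le> t * (2 * (y \<bullet> y)) + t^2 * (Q y - m0 * (norm y)^2)" for t
  proof -
    have "w0 + t *\<^sub>R y \<in> W" using w0W yW unfolding W_def by (intro span_add span_mul)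
    then have "0 \<le> Q (w0 + t *\<^sub>R y) - m0 * (norm (w0 + t *\<^sub>R y))^2" using claim1 by force
    also have "Q (w0 + t *\<^sub>R y) = Q w0 + 2 * t * (y \<bullet> (design_matrix N phi *v w0)) + t^2 * Q y"
      unfolding Q_def design_bil
      by (simp add: inner_add_right power2_eq_square algebra_simps sum.distrib sum_distrib_left)
    also have "(norm (w0 + t *\<^sub>R y))^2 = 1 + 2 * t * (w0 \<bullet> y) + t^2 * (norm y)^2"
    proof -
      have "(w0 + t *\<^sub>R y) \<bullet> (w0 + t *\<^sub>R y) = w0 \<bullet> w0 + 2 * t * (w0 \<bullet> y) + t^2 * (y \<bullet> y)"
        by (simp add: inner_add_left inner_add_right inner_commute power2_eq_square algebra_simps)
      moreover have "w0 \<bullet> w0 = 1" using nw0 by (simp add: dot_square_norm)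
      ultimately show ?thesis by (simp add: dot_square_norm)
    qed
    also have "y \<bullet> (design_matrix N phi *v w0) = y \<bullet> y + m0 * (w0 \<bullet> y)"
      unfolding y_def by (simp add: inner_diff_left inner_diff_right inner_commute algebra_simps)
    finally show ?thesis unfolding m0_def by (simp add: algebra_simps)
  qed
  have "y \<bullet> y = 0"
  proof (rule ccontr)
    assume ne: "y \<bullet> y \<noteq> 0"
    define a where "a = 2 * (y \<bullet> y)"
    define b where "b = Q y - m0 * (norm y)^2"
    have a: "a > 0" using ne unfolding a_def by (simp add: less_le)
    define t where "t = - a / (2 * (\<bar>b\<bar> + 1))"
    have "0 \<le> t * a + t^2 * b" using key[of t] unfolding a_def b_def .
    also have "t * a + t^2 * b = t * (a + t * b)" by (simp add: power2_eq_square algebra_simps)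
    also have "\<dots> < 0"
    proof (rule mult_neg_pos)
      show "t < 0" unfolding t_def using a by (simp add: add_pos_nonneg divide_pos_pos)
      have "\<bar>t * b\<bar> = a * (\<bar>b\<bar> / (2 * (\<bar>b\<bar> + 1)))" unfolding t_def using a by (simp add: abs_mult)
      also have "\<dots> < a * 1" using a by (intro mult_strict_left_mono) (auto simp: field_simps)
      finally have "\<bar>t * b\<bar> < a" by simp
      then show "0 < a + t * b" using a by linarith
    qed
    finally show False by simp
  qed
  then have y0: "y = 0" by simp
  have eig: "design_matrix N phi *v w0 = m0 *\<^sub>R w0" using y0 unfolding y_def by simp
  have m0pos: "m0 > 0"
  proof (rule ccontr)
    assume "\<not> m0 > 0"
    moreover have "m0 \<ge> 0" unfolding m0_def Q_def by (simp add: sum_nonneg)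
    ultimately have "(\<Sum>k<N. (phi k \<bullet> w0)^2) = 0" using N unfolding m0_def Q_def by simp
    then have "\<forall>k\<in>{..<N}. (phi k \<bullet> w0)^2 = 0" by (subst (asm) sum_nonneg_eq_0_iff) auto
    then have "orthogonal w0 x" if "x \<in> phi ` {..<N}" for x
      using that by (auto simp: orthogonal_def inner_commute)
    then have "orthogonal w0 w0" using orthogonal_to_span w0W unfolding W_def by blast
    then show False using nw0 by (simp add: orthogonal_def)
  qed
  have m0S: "m0 \<in> {c. c > 0 \<and> is_eigenvalue (design_matrix N phi) c}"
    using m0pos eig nw0 unfolding is_eigenvalue_def by (auto intro!: exI[of _ w0])
  have lam_le: "lambda_phi N phi \<le> m0"
    unfolding lambda_phi_def using eig_finite m0S by (rule Min_le)
  have lam_in: "lambda_phi N phi \<in> {c. c > 0 \<and> is_eigenvalue (design_matrix N phi) c}"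
    unfolding lambda_phi_def using eig_finite m0S by (intro Min_in) auto
  then show "lambda_phi N phi > 0" by simp
  fix w assume "w \<in> span (phi ` {..<N})"
  then have "m0 * (norm w)^2 \<le> Q w" using claim1 unfolding W_def by blast
  moreover have "lambda_phi N phi * (norm w)^2 \<le> m0 * (norm w)^2"
    using lam_le by (intro mult_right_mono) auto
  ultimately show "lambda_phi N phi * (norm w)^2 \<le> (1 / real N) * (\<Sum>k<N. (phi k \<bullet> w)^2)"
    unfolding Q_def by linarith
qed



theorem lemma10:
  fixes N :: nat and phi :: "nat \<Rightarrow> real^'d" and \<theta>s :: "real^'d"
  defines "L \<equiv> glm_loss N phi \<theta>s"
      and "\<beta> \<equiv> 3 / 8 * max_phi_sq N phi"
      and "v \<equiv> Min {glm_pi phi \<theta>s i * (1 - glm_pi phi \<theta>s i) | i. i < N}"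
      and "lam \<equiv> lambda_phi N phi"
  assumes "N \<ge> 1"
      and "\<exists>i<N. phi i \<noteq> 0"
  shows "(\<forall>\<theta> z. \<bar>z \<bullet> (hessian L \<theta> *v z)\<bar> \<le> \<beta> * (norm z)^2)
       \<and> (\<forall>\<theta> z. L \<theta> > 0 \<longrightarrow>
            (let u = glm_u N phi \<theta>;
                 L1 = max_phi_sq N phi / (32 * (min u v * sqrt lam) powr (3/2));
                 L0 = 17 * max_phi_sq N phi / (512 * u^2 * min (u^2) (v^2) * lam);
                 g = norm (grad L \<theta>)
             in \<bar>z \<bullet> (hessian L \<theta> *v z)\<bar> \<le> (L1 * g + L0 * g^2 / L \<theta>) * (norm z)^2))"
proof -
  note N = assms(5) and ex = assms(6)
  define M where "M = max_phi_sq N phi"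
  have Mset: "{(norm (phi i))^2 | i. i < N} = (\<lambda>i. (norm (phi i))^2) ` {..<N}" by auto
  have Mge: "(norm (phi k))^2 \<le> M" if "k < N" for k
    unfolding M_def max_phi_sq_def Mset using that by (intro Max_ge) auto
  have M0: "0 \<le> M" using Mge[of 0] N by (meson dual_order.trans less_le_trans zero_le_power2 zero_less_one)
  have pis: "0 < glm_pi phi \<theta>s k" "glm_pi phi \<theta>s k < 1" for k
    unfolding glm_pi_def using sigmoid_pos sigmoid_lt1 by auto
  have partI: "\<bar>z \<bullet> (hessian L \<theta> *v z)\<bar> \<le> 3/8 * M * (norm z)^2" for \<theta> z
  proof -
    have "\<bar>z \<bullet> (hessian L \<theta> *v z)\<bar> = \<bar>\<Sum>k<N. 2 / N * hc (phi k \<bullet> \<theta>) (glm_pi phi \<theta>s k) * (phi k \<bullet> z)^2\<bar>"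
      unfolding L_def quad_hessian ..
    also have "\<dots> \<le> (\<Sum>k<N. \<bar>2 / N * hc (phi k \<bullet> \<theta>) (glm_pi phi \<theta>s k) * (phi k \<bullet> z)^2\<bar>)"
      by (rule sum_abs)
    also have "\<dots> \<le> (\<Sum>k<N. 2 / N * (3/16) * (M * (norm z)^2))"
    proof (rule sum_mono)
      fix k assume k: "k \<in> {..<N}"
      have "(phi k \<bullet> z)^2 \<le> (norm (phi k) * norm z)^2"
        using Cauchy_Schwarz_ineq2[of "phi k" z] by (metis abs_ge_zero power2_abs power_mono)
      also have "\<dots> = (norm (phi k))^2 * (norm z)^2" by (simp add: power_mult_distrib)
      also have "\<dots> \<le> M * (norm z)^2" using Mge k by (intro mult_right_mono) auto
      finally have c: "(phi k \<bullet> z)^2 \<le> M * (norm z)^2" .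
      have "\<bar>2 / N * hc (phi k \<bullet> \<theta>) (glm_pi phi \<theta>s k) * (phi k \<bullet> z)^2\<bar>
            = 2 / N * \<bar>hc (phi k \<bullet> \<theta>) (glm_pi phi \<theta>s k)\<bar> * (phi k \<bullet> z)^2"
        by (simp add: abs_mult)
      also have "\<dots> \<le> 2 / N * (3/16) * (M * (norm z)^2)"
      proof -
        have h: "\<bar>hc (phi k \<bullet> \<theta>) (glm_pi phi \<theta>s k)\<bar> \<le> 3/16"
          using hc_bound pis by blast
        have "2 / N * \<bar>hc (phi k \<bullet> \<theta>) (glm_pi phi \<theta>s k)\<bar> \<le> 2 / N * (3/16)"
          using h by (intro mult_left_mono) auto
        then show ?thesis using c by (rule mult_mono) simp_all
      qed
      finally show "\<bar>2 / N * hc (phi k \<bullet> \<theta>) (glm_pi phi \<theta>s k) * (phi k \<bullet> z)^2\<bar> \<le> 2 / N * (3/16) * (M * (norm z)^2)" .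
    qed
    also have "\<dots> = 3/8 * M * (norm z)^2" using N by simp
    finally show ?thesis .
  qed
  show ?thesis
  proof (intro conjI allI impI)
    fix \<theta> z show "\<bar>z \<bullet> (hessian L \<theta> *v z)\<bar> \<le> \<beta> * (norm z)^2"
      using partI unfolding \<beta>_def M_def by simp
  next
    fix \<theta> z0 assume Lpos: "L \<theta> > 0"
    define u where "u = glm_u N phi \<theta>"
    define g where "g = norm (grad L \<theta>)"
    define m where "m = min u v"
    have useq: "{glm_pi phi \<theta> i * (1 - glm_pi phi \<theta> i) | i. i < N} = (\<lambda>i. sd (phi i \<bullet> \<theta>)) ` {..<N}"
      by (auto simp: glm_pi_def sd_def)
    have vseq: "{glm_pi phi \<theta>s i * (1 - glm_pi phi \<theta>s i) | i. i < N} = (\<lambda>i. sd (phi i \<bullet> \<theta>s)) ` {..<N}"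
      by (auto simp: glm_pi_def sd_def)
    have ule: "u \<le> sd (phi k \<bullet> \<theta>)" if "k < N" for k
      unfolding u_def glm_u_def useq using that by (intro Min_le) auto
    have vle: "v \<le> sd (phi k \<bullet> \<theta>s)" if "k < N" for k
      unfolding v_def vseq using that by (intro Min_le) auto
    have upos: "u > 0"
    proof -
      have "u \<in> (\<lambda>i. sd (phi i \<bullet> \<theta>)) ` {..<N}" unfolding u_def glm_u_def useq using N by (intro Min_in) (auto simp: lessThan_empty_iff)
      then show ?thesis using sd_pos by auto
    qed
    have vpos: "v > 0"
    proof -
      have "v \<in> (\<lambda>i. sd (phi i \<bullet> \<theta>s)) ` {..<N}" unfolding v_def vseq using N by (intro Min_in) (auto simp: lessThan_empty_iff)
      then show ?thesis using sd_pos by auto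
    qed
    have mpos: "m > 0" unfolding m_def using upos vpos by simp
    have lampos: "lam > 0" unfolding lam_def using lambda_phi_props(1)[OF N ex] .
    obtain w zz where w: "w \<in> span (phi ` {..<N})"
      and zz: "\<And>x. x \<in> span (phi ` {..<N}) \<Longrightarrow> orthogonal zz x" and dec: "\<theta> - \<theta>s = w + zz"
      using orthogonal_subspace_decomp_exists[of "phi ` {..<N}" "\<theta> - \<theta>s"] by metis
    define r where "r k = sigmoid (phi k \<bullet> \<theta>) - sigmoid (phi k \<bullet> \<theta>s)" for k
    define D where "D k = phi k \<bullet> w" for k
    have Deq: "D k = phi k \<bullet> \<theta> - phi k \<bullet> \<theta>s" if "k < N" for k
    proof -
      have "orthogonal zz (phi k)" using that by (intro zz span_base) auto
      then have "phi k \<bullet> zz = 0" by (simp add: orthogonal_def inner_commute)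
      then have "phi k \<bullet> (\<theta> - \<theta>s) = D k" unfolding dec D_def by (simp add: inner_add_right)
      then show ?thesis by (simp add: inner_diff_right)
    qed
    have bnd: "4 * (r k)^2 \<le> r k * D k \<and> m^2 * (D k)^2 \<le> (r k)^2" if "k < N" for k
      using sigmoid_diff_bounds[of m "phi k \<bullet> \<theta>s" "phi k \<bullet> \<theta>"] ule[OF that] vle[OF that] mpos
      unfolding r_def Deq[OF that] m_def by auto
    have Leq: "L \<theta> = (1 / N) * (\<Sum>k<N. (r k)^2)"
      unfolding L_def glm_loss_def r_def glm_pi_def ..
    define G where "G = grad L \<theta> \<bullet> w"
    have Geq: "G = (\<Sum>k<N. 2 / N * r k * sd (phi k \<bullet> \<theta>) * D k)"
      unfolding G_def L_def inner_grad_loss r_def D_def glm_pi_def ..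
    have "8 * u * L \<theta> = (\<Sum>k<N. 2 / N * u * (4 * (r k)^2))"
      unfolding Leq by (simp add: sum_distrib_left mult_ac)
    also have "\<dots> \<le> (\<Sum>k<N. 2 / N * r k * sd (phi k \<bullet> \<theta>) * D k)"
    proof (rule sum_mono)
      fix k assume k: "k \<in> {..<N}"
      have "2 / N * u * (4 * (r k)^2) \<le> 2 / N * u * (r k * D k)"
        using bnd[of k] k upos by (intro mult_left_mono) auto
      also have "\<dots> \<le> 2 / N * sd (phi k \<bullet> \<theta>) * (r k * D k)"
        using bnd[of k] k ule[of k] by (intro mult_right_mono mult_left_mono) (auto, smt (verit) zero_le_power2)
      finally show "2 / N * u * (4 * (r k)^2) \<le> 2 / N * r k * sd (phi k \<bullet> \<theta>) * D k"
        by (simp add: mult_ac)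
    qed
    finally have GL: "8 * u * L \<theta> \<le> G" unfolding Geq .
    have Gg: "\<bar>G\<bar> \<le> g * norm w" unfolding G_def g_def by (rule Cauchy_Schwarz_ineq2)
    have "m^2 * (lam * (norm w)^2) \<le> m^2 * ((1 / real N) * (\<Sum>k<N. (D k)^2))"
      using lambda_phi_props(2)[OF N ex w] unfolding lam_def D_def by (intro mult_left_mono) auto
    also have "\<dots> = (1 / real N) * (\<Sum>k<N. m^2 * (D k)^2)" by (simp add: sum_distrib_left)
    also have "\<dots> \<le> (1 / real N) * (\<Sum>k<N. (r k)^2)"
      using bnd by (intro mult_left_mono sum_mono) auto
    finally have wL: "m^2 * lam * (norm w)^2 \<le> L \<theta>" unfolding Leq by (simp add: mult_ac)
    have "(8 * u * L \<theta>)^2 \<le> G^2" using GL upos Lpos by (intro power_mono) auto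
    also have "\<dots> \<le> (g * norm w)^2" using Gg by (metis abs_ge_zero power2_abs power_mono)
    finally have sq: "64 * u^2 * (L \<theta>)^2 \<le> g^2 * (norm w)^2" by (simp add: power_mult_distrib)
    have "64 * u^2 * (L \<theta>)^2 * (m^2 * lam) \<le> g^2 * (norm w)^2 * (m^2 * lam)"
      using mpos lampos by (intro mult_right_mono[OF sq]) auto
    also have "\<dots> = g^2 * ((norm w)^2 * (m^2 * lam))" by (simp add: mult_ac)
    also have "\<dots> \<le> g^2 * L \<theta>" using wL by (intro mult_left_mono) (auto simp: mult_ac)
    finally have "(64 * u^2 * m^2 * lam * L \<theta>) * L \<theta> \<le> g^2 * L \<theta>" by (simp add: power2_eq_square mult_ac)
    then have key: "64 * u^2 * m^2 * lam * L \<theta> \<le> g^2" using Lpos by simp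
    define D0 where "D0 = u^2 * m^2 * lam * L \<theta>"
    have D0pos: "D0 > 0" unfolding D0_def using upos mpos lampos Lpos by simp
    have minsq: "min (u^2) (v^2) = m^2"
    proof (cases "u \<le> v")
      case True
      then have "u^2 \<le> v^2" using upos by (intro power_mono) auto
      then show ?thesis using True by (simp add: min_def m_def)
    next
      case False
      then have "v^2 \<le> u^2" using vpos by (intro power_mono) auto
      then show ?thesis using False by (auto simp: min_def m_def)
    qed
    have L0t: "17 * M / (512 * u^2 * min (u^2) (v^2) * lam) * g^2 / L \<theta> = 17 * M / 512 * (g^2 / D0)"
      unfolding minsq D0_def by (simp add: field_simps)
    have "64 \<le> g^2 / D0" using key D0pos unfolding D0_def by (simp add: field_simps)
    then have "17 * M / 512 * 64 \<le> 17 * M / 512 * (g^2 / D0)" using M0 by (intro mult_left_mono) auto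
    then have L0b: "17 * M / 8 \<le> 17 * M / (512 * u^2 * min (u^2) (v^2) * lam) * g^2 / L \<theta>"
      unfolding L0t by simp
    have L1g: "0 \<le> M / (32 * (min u v * sqrt lam) powr (3/2)) * g"
      unfolding g_def using M0 by (intro mult_nonneg_nonneg divide_nonneg_nonneg) auto
    have "\<bar>z0 \<bullet> (hessian L \<theta> *v z0)\<bar> \<le> 3/8 * M * (norm z0)^2" by (rule partI)
    also have "\<dots> \<le> (M / (32 * (min u v * sqrt lam) powr (3/2)) * g
        + 17 * M / (512 * u^2 * min (u^2) (v^2) * lam) * g^2 / L \<theta>) * (norm z0)^2"
      using L0b L1g M0 by (intro mult_right_mono) auto
    finally show "let u = glm_u N phi \<theta>;
                 L1 = max_phi_sq N phi / (32 * (min u v * sqrt lam) powr (3/2));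
                 L0 = 17 * max_phi_sq N phi / (512 * u^2 * min (u^2) (v^2) * lam);
                 g = norm (grad L \<theta>)
             in \<bar>z0 \<bullet> (hessian L \<theta> *v z0)\<bar> \<le> (L1 * g + L0 * g^2 / L \<theta>) * (norm z0)^2"
      unfolding Let_def u_def g_def M_def .
  qed
qed

end
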